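(* Let $\epsilon>0$, let $q$ be a positive integer, and let $\Lambda_\epsilon$ be an $\epsilon$-lattice. There is a (randomized) function $Q_{\epsilon,q}:\mathbb{R}^d\to\{0,1\}^b$, with $b=d\log q$, mapping each $\mathbf{x}\in\mathbb{R}^d$ to a string $Q_{\epsilon,q}(\mathbf{x})$ which specifies a subset $\Lambda'_\epsilon\subset\Lambda_\epsilon$ with the following properties: there exists $\mathbf{z}\in\Lambda'_\epsilon$ such that $\mathbf{z}$ is an unbiased estimator of $\mathbf{x}$ (i.e. $\mathbb{E}[\mathbf{z}]=\mathbf{x}$) with $\|\mathbf{z}-\mathbf{x}\|<7\epsilon$, and for all $\mathbf{w}\in\Lambda'_\epsilon\setminus\{\mathbf{z}\}$, $\|\mathbf{z}-\mathbf{w}\|\ge 2q\epsilon$.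
   Context: $\|\cdot\|$ is a fixed one of the $\ell_1,\ell_2,\ell_\infty$ norms. A lattice is the set of integer combinations of a basis of $\mathbb{R}^d$. Its packing radius $r_p$ is the supremum of $r$ such that balls of radius $r$ around distinct lattice points are disjoint; its cover radius $r_c$ is the infimum of $r$ such that balls of radius $r$ around lattice points cover $\mathbb{R}^d$. An $\epsilon$-lattice is a lattice with $\epsilon=r_p\le r_c\le3\epsilon$. *)

theory Defs
  imports "HOL-Analysis.Analysis" "HOL-Probability.Probability"
begin

text \<open>The fixed norm: one of l1, l2, l-infinity on real^'n (d = CARD('n)).\<close>
datatype normkind = L1 | L2 | Linf

fun nrm :: "normkind \<Rightarrow> real^'n \<Rightarrow> real" where
  "nrm L1 x = (\<Sum>i\<in>UNIV. \<bar>x $ i\<bar>)"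
| "nrm L2 x = norm x"
| "nrm Linf x = Max (range (\<lambda>i. \<bar>x $ i\<bar>))"

definition is_lattice :: "(real^'n) set \<Rightarrow> bool" where
  "is_lattice L \<longleftrightarrow> (\<exists>B :: 'n \<Rightarrow> real^'n.
      inj B \<and> independent (range B) \<and> span (range B) = UNIV \<and>
      L = range (\<lambda>c :: 'n \<Rightarrow> int. \<Sum>i\<in>UNIV. real_of_int (c i) *\<^sub>R B i))"

definition packing_radius :: "normkind \<Rightarrow> (real^'n) set \<Rightarrow> real" where
  "packing_radius k L = Sup {r. \<forall>u\<in>L. \<forall>v\<in>L. u \<noteq> v \<longrightarrow>
      {y. nrm k (y - u) < r} \<inter> {y. nrm k (y - v) < r} = {}}"

definition cover_radius :: "normkind \<Rightarrow> (real^'n) set \<Rightarrow> real" where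
  "cover_radius k L = Inf {r. (\<Union>u\<in>L. {y. nrm k (y - u) \<le> r}) = UNIV}"

definition eps_lattice :: "normkind \<Rightarrow> real \<Rightarrow> (real^'n) set \<Rightarrow> bool" where
  "eps_lattice k \<epsilon> L \<longleftrightarrow> is_lattice L \<and> packing_radius k L = \<epsilon> \<and>
      \<epsilon> \<le> cover_radius k L \<and> cover_radius k L \<le> 3 * \<epsilon>"

end

theory Submission
  imports Defs
begin


lemma linf_ge: "\<bar>x $ i\<bar> \<le> nrm Linf (x::real^'n)"
  by (simp add: Max_ge)

lemma linf_le: "(\<And>i. \<bar>x $ i\<bar> \<le> c) \<Longrightarrow> nrm Linf (x::real^'n) \<le> c"
  by (auto simp: Max_le_iff)

lemma nrm_nonneg: "0 \<le> nrm k (x::real^'n)"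
proof (cases k)
  case Linf then show ?thesis using linf_ge[of x undefined] by (metis abs_ge_zero order_trans)
qed (auto simp: sum_nonneg)

lemma nrm_scale: "nrm k (c *\<^sub>R (x::real^'n)) = \<bar>c\<bar> * nrm k x"
proof (cases k)
  case L1 then show ?thesis by (simp add: abs_mult sum_distrib_left)
next
  case L2 then show ?thesis by simp
next
  case Linf
  have "nrm Linf (c *\<^sub>R x) \<le> \<bar>c\<bar> * nrm Linf x"
    by (rule linf_le) (simp add: abs_mult mult_left_mono linf_ge)
  moreover have "\<bar>c\<bar> * nrm Linf x \<le> nrm Linf (c *\<^sub>R x)"
  proof (cases "c = 0")
    case True then show ?thesis using nrm_nonneg[of Linf] by simp
  next
    case False
    have "nrm Linf x \<le> nrm Linf (c *\<^sub>R x) / \<bar>c\<bar>"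
      apply (rule linf_le)
      using linf_ge[of "c *\<^sub>R x"] False by (simp add: abs_mult field_simps)
    then show ?thesis using False by (simp add: field_simps)
  qed
  ultimately have "nrm Linf (c *\<^sub>R x) = \<bar>c\<bar> * nrm Linf x" by (rule antisym)
  then show ?thesis using Linf by simp
qed

lemma nrm_triangle: "nrm k ((x::real^'n) + y) \<le> nrm k x + nrm k y"
proof (cases k)
  case L1 then show ?thesis by (simp add: sum.distrib[symmetric] sum_mono abs_triangle_ineq)
next
  case L2 then show ?thesis by (simp add: norm_triangle_ineq)
next
  case Linf
  have "nrm Linf (x + y) \<le> nrm Linf x + nrm Linf y"
    apply (rule linf_le)
    using linf_ge[of x] linf_ge[of y] abs_triangle_ineq
    by (metis add_mono order_trans vector_add_component)
  then show ?thesis using Linf by simp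
qed

lemma nrm_minus: "nrm k (- (x::real^'n)) = nrm k x"
  using nrm_scale[of k "-1" x] by simp

lemma nrm_sub: "nrm k ((x::real^'n) - y) = nrm k (y - x)"
  using nrm_minus[of k "y - x"] by simp

lemma nrm_zero: "nrm k (0::real^'n) = 0"
  using nrm_scale[of k 0 0] by simp

lemma nrm_sum: "finite A \<Longrightarrow> nrm k (\<Sum>i\<in>A. f i :: real^'n) \<le> (\<Sum>i\<in>A. nrm k (f i))"
  by (induction A rule: finite_induct) (auto simp: nrm_zero intro: order_trans[OF nrm_triangle])

lemma nrm_upper: "\<exists>C>0. \<forall>x::real^'n. nrm k x \<le> C * norm x"
proof (cases k)
  case L1
  have "nrm k x \<le> real CARD('n) * norm x" for x::"real^'n"
    using L1 sum_mono[of UNIV "\<lambda>i. \<bar>x $ i\<bar>" "\<lambda>i. norm x"] component_le_norm_cart by auto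
  then show ?thesis by (intro exI[of _ "real CARD('n)"]) auto
next
  case L2 then show ?thesis by (intro exI[of _ 1]) auto
next
  case Linf then show ?thesis by (intro exI[of _ 1]) (auto intro: linf_le component_le_norm_cart)
qed

lemma nrm_lower: "\<exists>C>0. \<forall>x::real^'n. norm x \<le> C * nrm k x"
proof (cases k)
  case L1
  then show ?thesis by (intro exI[of _ 1]) (auto simp: norm_le_l1_cart)
next
  case L2 then show ?thesis by (intro exI[of _ 1]) auto
next
  case Linf
  have "norm x \<le> real CARD('n) * nrm k x" for x::"real^'n"
    using Linf sum_mono[of UNIV "\<lambda>i. \<bar>x $ i\<bar>" "\<lambda>i. nrm Linf x"] linf_ge norm_le_l1_cart[of x]
    by fastforce
  then show ?thesis by (intro exI[of _ "real CARD('n)"]) auto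
qed

lemma nrm_cont: "continuous_on UNIV (nrm k :: real^'n \<Rightarrow> real)"
proof -
  obtain C where C: "C > 0" "\<forall>x::real^'n. nrm k x \<le> C * norm x" using nrm_upper by blast
  have "\<bar>nrm k x - nrm k y\<bar> \<le> C * dist x y" for x y :: "real^'n"
    using nrm_triangle[of k "x - y" y] nrm_triangle[of k "y - x" x] C(2)[rule_format, of "x - y"]
      nrm_sub[of k x y] by (auto simp: dist_norm)
  then show ?thesis
    unfolding continuous_on_iff
  proof (intro ballI allI impI)
    fix x :: "real^'n" and e :: real assume "e > 0"
    show "\<exists>d>0. \<forall>x'\<in>UNIV. dist x' x < d \<longrightarrow> dist (nrm k x') (nrm k x) < e"
    proof (intro exI[of _ "e / C"] conjI ballI impI)
      show "e / C > 0" using \<open>e > 0\<close> C(1) by simp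
      fix y :: "real^'n" assume "dist y x < e / C"
      then have "C * dist y x < e" using C(1) by (simp add: field_simps)
      then show "dist (nrm k y) (nrm k x) < e"
        using \<open>\<And>x y. \<bar>nrm k x - nrm k y\<bar> \<le> C * dist x y\<close>[of y x] by (simp add: dist_real_def)
    qed
  qed
qed



lemma sep:
  fixes L :: "(real^'n) set"
  assumes "eps_lattice k \<epsilon> L" "u \<in> L" "v \<in> L" "u \<noteq> v"
  shows "2 * \<epsilon> \<le> nrm k (u - v)"
proof -
  let ?P = "{r. \<forall>u\<in>L. \<forall>v\<in>L. u \<noteq> v \<longrightarrow>
      {y. nrm k (y - u) < r} \<inter> {y. nrm k (y - v) < r} = {}}"
  have "0 \<in> ?P"
  proof -
    have "\<not> nrm k (y - u) < 0" for y u :: "real^'n" using nrm_nonneg[of k "y - u"] by linarith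
    then show ?thesis by auto
  qed
  moreover have "r \<le> nrm k (u - v) / 2" if "r \<in> ?P" for r
  proof (rule ccontr)
    assume nle: "\<not> ?thesis"
    let ?y = "u + (1/2) *\<^sub>R (v - u)"
    have "?y - u = (1/2) *\<^sub>R (v - u)" "?y - v = (1/2) *\<^sub>R (u - v)"
      unfolding vec_eq_iff by (simp_all add: field_simps)
    then have "nrm k (?y - u) < r" "nrm k (?y - v) < r"
      using nle nrm_scale[of k "1/2" "v - u"] nrm_scale[of k "1/2" "u - v"] nrm_sub[of k v u] by simp_all
    then show False using that assms(2-4) by blast
  qed
  ultimately have "Sup ?P \<le> nrm k (u - v) / 2" by (intro cSup_least) auto
  moreover have "Sup ?P = \<epsilon>" using assms(1) unfolding eps_lattice_def packing_radius_def by simp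
  ultimately show ?thesis by simp
qed

definition comb :: "('n \<Rightarrow> real^'n) \<Rightarrow> ('n \<Rightarrow> int) \<Rightarrow> real^'n" where
  "comb B c = (\<Sum>i\<in>UNIV. real_of_int (c i) *\<^sub>R B i)"

lemma lattice_obtain:
  assumes "is_lattice L"
  obtains B where "span (range B) = UNIV" "L = range (comb B)" "inj B"
  using assms unfolding is_lattice_def comb_def by blast

lemma cover:
  fixes L :: "(real^'n) set"
  assumes "eps_lattice k \<epsilon> L" "\<epsilon> > 0"
  shows "\<exists>r. \<epsilon> \<le> r \<and> r < 13 * \<epsilon> / 4 \<and> (\<forall>y. \<exists>p\<in>L. nrm k (y - p) \<le> r)"
proof -
  obtain B where B: "span (range B) = UNIV" "L = range (comb B)" "inj B"
    using assms(1) lattice_obtain unfolding eps_lattice_def by blast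
  let ?C = "{r. (\<Union>u\<in>L. {y. nrm k (y - u) \<le> r}) = UNIV}"
  define R0 where "R0 = (\<Sum>i\<in>UNIV. nrm k (B i))"
  have "\<exists>p\<in>L. nrm k (y - p) \<le> R0" for y
  proof -
    have "y \<in> span (range B)" using B(1) by simp
    then obtain u where u: "(\<Sum>v\<in>range B. u v *\<^sub>R v) = y"
      using span_finite[of "range B"] by auto
    have y: "y = (\<Sum>i\<in>UNIV. u (B i) *\<^sub>R B i)"
      using u sum.reindex[OF B(3), of "\<lambda>v. u v *\<^sub>R v"] by simp
    define p where "p = comb B (\<lambda>i. \<lfloor>u (B i)\<rfloor>)"
    have "y - p = (\<Sum>i\<in>UNIV. (u (B i) - \<lfloor>u (B i)\<rfloor>) *\<^sub>R B i)"
      unfolding y p_def comb_def by (simp add: sum_subtractf scaleR_diff_left)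
    then have "nrm k (y - p) \<le> (\<Sum>i\<in>UNIV. nrm k ((u (B i) - \<lfloor>u (B i)\<rfloor>) *\<^sub>R B i))"
      by (simp only:) (rule nrm_sum, simp)
    also have "\<dots> \<le> R0" unfolding R0_def
    proof (rule sum_mono)
      fix i
      define c where "c = u (B i) - \<lfloor>u (B i)\<rfloor>"
      have c: "0 \<le> c" "c \<le> 1" unfolding c_def by linarith+
      have "nrm k (c *\<^sub>R B i) = c * nrm k (B i)" using nrm_scale[of k c "B i"] c by simp
      then have "nrm k (c *\<^sub>R B i) \<le> nrm k (B i)"
        using nrm_nonneg[of k "B i"] c mult_left_le_one_le by metis
      then show "nrm k ((u (B i) - \<lfloor>u (B i)\<rfloor>) *\<^sub>R B i) \<le> nrm k (B i)" unfolding c_def .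
    qed
    finally show ?thesis using B(2) p_def by auto
  qed
  then have "R0 \<in> ?C" by blast
  then have ne: "?C \<noteq> {}" by blast
  have bdd: "bdd_below ?C"
  proof (rule bdd_belowI)
    fix r assume "r \<in> ?C"
    then obtain u where "u \<in> L" "nrm k (0 - u) \<le> r" by blast
    then show "0 \<le> r" using nrm_nonneg[of k "0 - u"] by linarith
  qed
  have cr: "\<epsilon> \<le> Inf ?C" "Inf ?C \<le> 3 * \<epsilon>"
    using assms(1) unfolding eps_lattice_def cover_radius_def by auto
  then have "Inf ?C < 13 * \<epsilon> / 4" using assms(2) by simp
  then obtain r where r: "r \<in> ?C" "r < 13 * \<epsilon> / 4" using cInf_lessD[OF ne] by blast
  have "Inf ?C \<le> r" using cInf_lower[OF r(1) bdd] .
  then have "\<epsilon> \<le> r" using cr by simp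
  moreover have "\<forall>y. \<exists>p\<in>L. nrm k (y - p) \<le> r" using r(1) by blast
  ultimately show ?thesis using r(2) by blast
qed

lemma finite_near:
  fixes L :: "(real^'n) set"
  assumes "eps_lattice k \<epsilon> L" "\<epsilon> > 0"
  shows "finite {u\<in>L. nrm k (u - x) < R}"
proof -
  let ?S = "{u\<in>L. nrm k (u - x) < R}"
  obtain C where C: "C > 0" "\<forall>x::real^'n. nrm k x \<le> C * norm x" using nrm_upper by blast
  obtain C' where C': "C' > 0" "\<forall>x::real^'n. norm x \<le> C' * nrm k x" using nrm_lower by blast
  have "uniform_discrete ?S"
    unfolding uniform_discrete_def
  proof (intro exI[of _ "2 * \<epsilon> / C"] conjI ballI impI)
    show "2 * \<epsilon> / C > 0" using C assms(2) by simp
    fix u v assume uv: "u \<in> ?S" "v \<in> ?S" "dist u v < 2 * \<epsilon> / C"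
    show "u = v"
    proof (rule ccontr)
      assume "u \<noteq> v"
      then have "2 * \<epsilon> \<le> nrm k (u - v)" using sep[OF assms(1)] uv by auto
      also have "\<dots> \<le> C * norm (u - v)" using C(2)[rule_format] .
      also have "\<dots> < 2 * \<epsilon>" using uv(3) C(1) by (simp add: dist_norm field_simps)
      finally show False by simp
    qed
  qed
  moreover have "bounded ?S"
    unfolding bounded_iff
  proof (intro exI[of _ "norm x + C' * R"] ballI)
    fix u assume "u \<in> ?S"
    then have "norm (u - x) \<le> C' * R" using C' by (smt (verit, best) mem_Collect_eq mult_left_mono)
    then show "norm u \<le> norm x + C' * R" by (smt (verit) norm_triangle_ineq2)
  qed
  ultimately show ?thesis using uniform_discrete_finite_iff by blast
qed



lemma linear_bound:
  fixes a :: "real^'n"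
  assumes "a \<noteq> 0"
  obtains v m where "nrm k v \<le> 1" "m > 0" "a \<bullet> v = - m" "\<And>w. a \<bullet> w \<le> m * nrm k w"
proof -
  obtain C' where C': "C' > 0" "\<forall>x::real^'n. norm x \<le> C' * nrm k x" using nrm_lower by blast
  let ?K = "{w::real^'n. nrm k w \<le> 1}"
  have "closed ?K" by (rule closed_Collect_le[OF nrm_cont continuous_on_const])
  moreover have "bounded ?K" unfolding bounded_iff
  proof (intro exI[of _ C'] ballI)
    fix w assume "w \<in> ?K"
    then have "C' * nrm k w \<le> C' * 1" using C'(1) by (intro mult_left_mono) auto
    then show "norm w \<le> C'" using C'(2)[rule_format, of w] by simp
  qed
  ultimately have cK: "compact ?K" by (simp add: compact_eq_bounded_closed)
  have "0 \<in> ?K" by (simp add: nrm_zero)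
  moreover have "continuous_on ?K (\<lambda>w. - (a \<bullet> w))" by (intro continuous_intros)
  ultimately obtain v where v: "v \<in> ?K" "\<And>w. w \<in> ?K \<Longrightarrow> - (a \<bullet> w) \<le> - (a \<bullet> v)"
    using continuous_attains_sup[OF cK, of "\<lambda>w. - (a \<bullet> w)"] by blast
  define m where "m = - (a \<bullet> v)"
  have "0 < norm a" using assms by simp
  then have "0 < C' * nrm k a" using C'(2)[rule_format, of a] by linarith
  then have na: "nrm k a > 0" using C'(1) by (simp add: zero_less_mult_iff)
  define w0 where "w0 = (- 1 / nrm k a) *\<^sub>R a"
  have "nrm k w0 = 1" unfolding w0_def using nrm_minus[of k "(1 / nrm k a) *\<^sub>R a"] nrm_scale[of k "1 / nrm k a" a] na by simp
  then have "- (a \<bullet> w0) \<le> m" using v(2) m_def by simp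
  moreover have "- (a \<bullet> w0) = (a \<bullet> a) / nrm k a" unfolding w0_def by simp
  moreover have "a \<bullet> a > 0" using assms by simp
  ultimately have "m > 0" using na divide_pos_pos[of "a \<bullet> a" "nrm k a"] by linarith
  have bound: "a \<bullet> w \<le> m * nrm k w" for w
  proof (cases "nrm k w = 0")
    case True
    then have "w = 0" using C'(2)[rule_format, of w] by simp
    then show ?thesis by (simp add: nrm_zero)
  next
    case False
    then have nw: "nrm k w > 0" using nrm_nonneg[of k w] by simp
    have nn: "nrm k (- ((1 / nrm k w) *\<^sub>R w)) = 1" using nrm_minus[of k "(1 / nrm k w) *\<^sub>R w"] nrm_scale[of k "1 / nrm k w" w] nw by simp
    have "- (a \<bullet> (- ((1 / nrm k w) *\<^sub>R w))) \<le> - (a \<bullet> v)" by (rule v(2)) (simp add: nn)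
    then have "(1 / nrm k w) * (a \<bullet> w) \<le> m" unfolding m_def by (simp only: inner_minus_right inner_scaleR_right minus_minus)
    then have "nrm k w * ((1 / nrm k w) * (a \<bullet> w)) \<le> nrm k w * m" using nw by (intro mult_left_mono) auto
    moreover have "nrm k w * ((1 / nrm k w) * (a \<bullet> w)) = a \<bullet> w" using nw by simp
    ultimately show ?thesis by (simp add: mult.commute)
  qed
  show ?thesis
  proof (rule that[of v m])
    show "nrm k v \<le> 1" using v(1) by simp
    show "m > 0" by fact
    show "a \<bullet> v = - m" unfolding m_def by simp
    show "a \<bullet> w \<le> m * nrm k w" for w by (rule bound)
  qed
qed


lemma in_hull:
  fixes L :: "(real^'n) set"
  assumes lat: "eps_lattice k \<epsilon> L" and ep: "\<epsilon> > 0"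
  shows "x \<in> convex hull {u\<in>L. nrm k (u - x) < 7 * \<epsilon>}"
proof (rule ccontr)
  let ?S = "{u\<in>L. nrm k (u - x) < 7 * \<epsilon>}"
  assume nx: "x \<notin> convex hull ?S"
  have "finite ?S" by (rule finite_near[OF lat ep])
  then have "closed (convex hull ?S)"
    by (simp add: compact_imp_closed compact_convex_hull finite_imp_compact)
  then obtain a b where ab: "a \<bullet> x < b" "\<And>y. y \<in> convex hull ?S \<Longrightarrow> b < a \<bullet> y"
    using separating_hyperplane_closed_point[OF convex_convex_hull _ nx] by blast
  obtain r where r: "\<epsilon> \<le> r" "r < 13 * \<epsilon> / 4" "\<And>y. \<exists>p\<in>L. nrm k (y - p) \<le> r"
    using cover[OF lat ep] by blast
  have inS: "p \<in> convex hull ?S" if "p \<in> L" "nrm k (p - x) < 7 * \<epsilon>" for p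
    by (rule hull_subset[THEN subsetD]) (simp add: that)
  obtain p0 where "p0 \<in> L" "nrm k (x - p0) \<le> r" using r(3) by blast
  moreover have "nrm k (p0 - x) < 7 * \<epsilon>" using \<open>nrm k (x - p0) \<le> r\<close> nrm_sub[of k x p0] r(2) ep by simp
  ultimately have "p0 \<in> convex hull ?S" using inS by blast
  then have "b < a \<bullet> p0" by (rule ab(2))
  then have "a \<noteq> 0" using ab(1) by auto
  then obtain v m where vm: "nrm k v \<le> 1" "m > 0" "a \<bullet> v = - m" "\<And>w. a \<bullet> w \<le> m * nrm k w"
    using linear_bound by blast
  define t where "t = r + \<epsilon> / 4"
  have tpos: "t > 0" using r ep t_def by simp
  define y where "y = x + t *\<^sub>R v"
  obtain p where p: "p \<in> L" "nrm k (y - p) \<le> r" using r(3) by blast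
  have "a \<bullet> p = a \<bullet> x + t * (a \<bullet> v) + a \<bullet> (p - y)"
    unfolding y_def by (simp add: inner_diff_right inner_add_right)
  also have "\<dots> \<le> a \<bullet> x - t * m + m * r"
  proof -
    have "a \<bullet> (p - y) \<le> m * nrm k (p - y)" by (rule vm(4))
    also have "\<dots> \<le> m * r" using p(2) nrm_sub[of k p y] vm(2) by simp
    finally show ?thesis using vm(3) by simp
  qed
  also have "\<dots> < a \<bullet> x" using vm(2) ep unfolding t_def by (simp add: algebra_simps)
  finally have ap: "a \<bullet> p < a \<bullet> x" .
  have "nrm k (y - x) = t * nrm k v" unfolding y_def using nrm_scale[of k t v] tpos by simp
  also have "\<dots> \<le> t" using vm(1) tpos by (simp add: mult_left_le)
  finally have "nrm k (p - x) \<le> r + t"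
    using nrm_triangle[of k "p - y" "y - x"] nrm_sub[of k p y] p(2) by simp
  then have "nrm k (p - x) < 7 * \<epsilon>" using r t_def by simp
  then have "b < a \<bullet> p" using ab(2) inS p(1) by blast
  then show False using ap ab(1) by simp
qed



lemma pmf_exists:
  fixes x :: "real^'n" and T :: "(real^'n) set"
  assumes T: "finite T" and u: "\<forall>z\<in>T. 0 \<le> u z" "sum u T = 1" "(\<Sum>v\<in>T. u v *\<^sub>R v) = x"
  shows "\<exists>P0 :: (real^'n) pmf. set_pmf P0 \<subseteq> T \<and> measure_pmf.expectation P0 (\<lambda>z. z) = x"
proof -
  define g where "g z = (if z \<in> T then u z else 0)" for z
  have nn: "\<And>z. 0 \<le> g z" using u(1) by (simp add: g_def)
  have "(\<integral>\<^sup>+z. ennreal (g z) \<partial>count_space UNIV) = (\<Sum>z\<in>T. ennreal (g z))"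
    by (rule nn_integral_count_space'[OF T]) (auto simp: g_def)
  also have "\<dots> = ennreal (\<Sum>z\<in>T. g z)" using nn by simp
  also have "(\<Sum>z\<in>T. g z) = 1" using u(2) by (simp add: g_def)
  finally have prob: "(\<integral>\<^sup>+z. ennreal (g z) \<partial>count_space UNIV) = 1" by simp
  define P0 where "P0 = embed_pmf g"
  have pm: "pmf P0 z = g z" for z unfolding P0_def by (rule pmf_embed_pmf[OF nn prob])
  have sp: "set_pmf P0 = {z. g z \<noteq> 0}" unfolding P0_def by (rule set_embed_pmf[OF nn prob])
  then have sub: "set_pmf P0 \<subseteq> T" by (auto simp: g_def split: if_splits)
  have "measure_pmf.expectation P0 (\<lambda>z. z) = (\<Sum>z\<in>T. pmf P0 z *\<^sub>R z)"
    by (rule integral_measure_pmf[OF T]) (use sub in auto)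
  also have "\<dots> = x" using u(3) by (simp add: pm g_def)
  finally show ?thesis using sub by blast
qed

lemma enc_exists:
  fixes q :: nat
  assumes "q \<ge> 1"
  shows "\<exists>enc :: ('n::finite \<Rightarrow> int) \<Rightarrow> bool list.
     (\<forall>f. (\<forall>i. f i \<in> {0..<int q}) \<longrightarrow> length (enc f) = nat \<lceil>real CARD('n) * log 2 (real q)\<rceil>) \<and>
     inj_on enc {f. \<forall>i. f i \<in> {0..<int q}}"
proof -
  define b where "b = nat \<lceil>real CARD('n) * log 2 (real q)\<rceil>"
  define A where "A = {f :: 'n \<Rightarrow> int. \<forall>i. f i \<in> {0..<int q}}"
  define Bs where "Bs = {xs :: bool list. set xs \<subseteq> UNIV \<and> length xs = b}"
  have A: "A = Pi\<^sub>E UNIV (\<lambda>_. {0..<int q})" unfolding A_def PiE_UNIV_domain by (auto simp: Pi_def)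
  have fA: "finite A" unfolding A by (rule finite_PiE) auto
  have cA: "card A = q ^ CARD('n)" unfolding A by (simp add: card_PiE)
  have fB: "finite Bs" unfolding Bs_def by (rule finite_lists_length_eq) simp
  have cB: "card Bs = 2 ^ b" unfolding Bs_def by (subst card_lists_length_eq) simp_all
  have l0: "0 \<le> log 2 (real q)" using assms by simp
  have "real q ^ CARD('n) = (2 powr log 2 (real q)) ^ CARD('n)" using assms by simp
  also have "\<dots> = 2 powr (real CARD('n) * log 2 (real q))" by (rule powr_power) simp
  also have "\<dots> \<le> 2 powr (real b)" unfolding b_def
    by (rule powr_mono) (use l0 in auto)
  also have "\<dots> = 2 ^ b" by (rule powr_realpow) simp
  finally have "real (q ^ CARD('n)) \<le> real (2 ^ b)" by simp
  then have "card A \<le> card Bs" unfolding cA cB by linarith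
  then obtain enc where "enc ` A \<subseteq> Bs" "inj_on enc A" using card_le_inj[OF fA fB] by blast
  then show ?thesis unfolding A_def Bs_def b_def by (intro exI[of _ enc]) auto
qed



lemma comb_diff:
  assumes "\<And>i. c i - c' i = int q * m i"
  shows "comb B c - comb B c' = real q *\<^sub>R comb B m"
proof -
  have "comb B c - comb B c' = (\<Sum>i\<in>UNIV. real_of_int (c i - c' i) *\<^sub>R B i)"
    unfolding comb_def by (simp add: sum_subtractf[symmetric] scaleR_diff_left)
  also have "\<dots> = (\<Sum>i\<in>UNIV. real q *\<^sub>R (real_of_int (m i) *\<^sub>R B i))"
    using assms by simp
  also have "\<dots> = real q *\<^sub>R comb B m" unfolding comb_def by (simp add: scaleR_sum_right)
  finally show ?thesis .
qed

theorem lemma14: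
  fixes k :: normkind and \<epsilon> :: real and q :: nat and L :: "(real^'n) set"
  assumes "\<epsilon> > 0" and "q \<ge> 1" and "eps_lattice k \<epsilon> L"
  defines "b \<equiv> nat \<lceil>real CARD('n) * log 2 (real q)\<rceil>"
  shows "\<exists>D :: bool list \<Rightarrow> (real^'n) set. \<forall>x :: real^'n.
           \<exists>P :: ((real^'n) \<times> bool list) pmf.
             integrable (measure_pmf P) fst \<and>
             measure_pmf.expectation P fst = x \<and>
             (\<forall>(z, s) \<in> set_pmf P.
                length s = b \<and> D s \<subseteq> L \<and> z \<in> D s \<and>
                nrm k (z - x) < 7 * \<epsilon> \<and>
                (\<forall>w \<in> D s - {z}. nrm k (z - w) \<ge> 2 * real q * \<epsilon>))"
proof -
  note ep = assms(1) and q1 = assms(2) and lat = assms(3)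
  obtain B where B: "span (range B) = UNIV" "L = range (comb B)" "inj B"
    using lat lattice_obtain unfolding eps_lattice_def by blast
  obtain enc :: "('n \<Rightarrow> int) \<Rightarrow> bool list" where
    enc: "\<And>f. (\<forall>i. f i \<in> {0..<int q}) \<Longrightarrow> length (enc f) = b"
      "inj_on enc {f. \<forall>i. f i \<in> {0..<int q}}"
    using enc_exists[OF q1] unfolding b_def by blast
  define md where "md c = (\<lambda>i. c i mod int q)" for c :: "'n \<Rightarrow> int"
  have md_in: "md c \<in> {f. \<forall>i. f i \<in> {0..<int q}}" for c
    using q1 by (simp add: md_def)
  define D where "D s = {w \<in> L. \<exists>c. w = comb B c \<and> enc (md c) = s}" for s
  define code where "code z = enc (md (SOME c. z = comb B c))" for z
  have key: "length (code z) = b \<and> D (code z) \<subseteq> L \<and> z \<in> D (code z) \<and>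
      (\<forall>w \<in> D (code z) - {z}. nrm k (z - w) \<ge> 2 * real q * \<epsilon>)" if zL: "z \<in> L" for z
  proof -
    define c where "c = (SOME c. z = comb B c)"
    have "\<exists>c. z = comb B c" using zL B(2) by blast
    then have zc: "z = comb B c" unfolding c_def by (rule someI_ex)
    have code_z: "code z = enc (md c)" unfolding code_def c_def by simp
    have "length (code z) = b" unfolding code_z using enc(1) md_in by blast
    moreover have "D (code z) \<subseteq> L" unfolding D_def by blast
    moreover have "z \<in> D (code z)" unfolding D_def code_z using zL zc by blast
    moreover have "nrm k (z - w) \<ge> 2 * real q * \<epsilon>" if w: "w \<in> D (code z) - {z}" for w
    proof -
      obtain c' where c': "w = comb B c'" "enc (md c') = enc (md c)" "w \<noteq> z"
        using w unfolding D_def code_z by blast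
      have mdeq: "md c' = md c" by (rule inj_onD[OF enc(2) c'(2) md_in md_in])
      have dv: "int q dvd (c i - c' i)" for i
      proof -
        have "c i mod int q = c' i mod int q" using fun_cong[OF mdeq, of i] unfolding md_def by simp
        then show ?thesis using mod_eq_dvd_iff by blast
      qed
      define m where "m i = (c i - c' i) div int q" for i
      have "c i - c' i = int q * m i" for i unfolding m_def using dv[of i] by simp
      then have zw: "z - w = real q *\<^sub>R comb B m" unfolding zc c'(1) by (rule comb_diff)
      have "comb B m \<noteq> 0" using zw c'(3) by auto
      have m0: "comb B m \<in> L" "comb B (\<lambda>_. 0) \<in> L" using B(2) by auto
      have z0: "comb B (\<lambda>_. 0) = 0" unfolding comb_def by simp
      have "2 * \<epsilon> \<le> nrm k (comb B m - comb B (\<lambda>_. 0))"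
        by (rule sep[OF lat m0]) (use \<open>comb B m \<noteq> 0\<close> z0 in simp)
      then have "2 * \<epsilon> \<le> nrm k (comb B m)" using z0 by simp
      then have "real q * (2 * \<epsilon>) \<le> real q * nrm k (comb B m)" by (intro mult_left_mono) auto
      also have "\<dots> = nrm k (z - w)" unfolding zw using nrm_scale[of k "real q" "comb B m"] by simp
      finally show ?thesis by (simp add: algebra_simps)
    qed
    ultimately show ?thesis by blast
  qed
  show ?thesis
  proof (intro exI[of _ D] allI)
    fix x :: "real^'n"
    let ?S = "{u\<in>L. nrm k (u - x) < 7 * \<epsilon>}"
    have "x \<in> convex hull ?S" by (rule in_hull[OF lat ep])
    then obtain T u where T: "finite T" "T \<subseteq> ?S" "\<forall>z\<in>T. 0 \<le> u z" "sum u T = 1"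
        "(\<Sum>v\<in>T. u v *\<^sub>R v) = x"
      unfolding convex_hull_explicit by blast
    obtain P0 :: "(real^'n) pmf" where P0: "set_pmf P0 \<subseteq> T" "measure_pmf.expectation P0 (\<lambda>z. z) = x"
      using pmf_exists[OF T(1) T(3) T(4) T(5)] by blast
    define P where "P = map_pmf (\<lambda>z. (z, code z)) P0"
    have "finite (set_pmf P)" unfolding P_def using P0(1) T(1) by (auto intro: finite_subset)
    then have "integrable (measure_pmf P) fst" by (rule integrable_measure_pmf_finite)
    moreover have "measure_pmf.expectation P fst = x" unfolding P_def using P0(2) by simp
    moreover have "\<forall>(z, s) \<in> set_pmf P.
                length s = b \<and> D s \<subseteq> L \<and> z \<in> D s \<and>
                nrm k (z - x) < 7 * \<epsilon> \<and>
                (\<forall>w \<in> D s - {z}. nrm k (z - w) \<ge> 2 * real q * \<epsilon>)"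
    proof (clarify)
      fix z s assume "(z, s) \<in> set_pmf P"
      then have zT: "z \<in> T" and s: "s = code z" unfolding P_def using P0(1) by auto
      then have "z \<in> L" "nrm k (z - x) < 7 * \<epsilon>" using T(2) by auto
      then show "length s = b \<and> D s \<subseteq> L \<and> z \<in> D s \<and>
                nrm k (z - x) < 7 * \<epsilon> \<and>
                (\<forall>w \<in> D s - {z}. nrm k (z - w) \<ge> 2 * real q * \<epsilon>)"
        using key[of z] s by simp
    qed
    ultimately show "\<exists>P :: ((real^'n) \<times> bool list) pmf.
             integrable (measure_pmf P) fst \<and>
             measure_pmf.expectation P fst = x \<and>
             (\<forall>(z, s) \<in> set_pmf P.
                length s = b \<and> D s \<subseteq> L \<and> z \<in> D s \<and>
                nrm k (z - x) < 7 * \<epsilon> \<and>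
                (\<forall>w \<in> D s - {z}. nrm k (z - w) \<ge> 2 * real q * \<epsilon>))" by blast
  qed
qed

end
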